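(* Let $G$ be a finite graph with minimum degree at least $3$, let $x_0$ be a vertex of $G$, let $P$ be a longest path in $G$ starting at $x_0$, and let $(S,T)$ be the Pósa pair of $P$ (defined in the context). Then $$e(S\cup T)>|S\cup T|,$$ where $e(A)$ denotes the number of edges of the subgraph of $G$ induced by $A$; i.e. the induced subgraph $G(S\cup T)$ has edge density strictly greater than $1$.
   Context: Rotations and Pósa sets: If $Q=x_0x_1\dots x_h$ is a path from $x_0$ and $\{x_h,x_i\}$ is an edge of $G$ for some $i<h-1$, then $Q'=x_0\dots x_i x_h x_{h-1}\dots x_{i+1}$ is again a path from $x_0$ of the same length, said to be obtained from $Q$ by a rotation. For a longest path $P=x_0\dots x_h$ from $x_0$, $S$ is the set consisting of $x_h$ and the endpoints (other than $x_0$) of all paths obtainable from $P$ by any finite sequence of rotations, and $T=N(S)$ is the set of vertices not in $S$ having a neighbor in $S$. *)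

theory Defs
  imports Main
begin

definition simple_graph :: "'a set \<Rightarrow> ('a \<Rightarrow> 'a \<Rightarrow> bool) \<Rightarrow> bool" where
  "simple_graph V E \<longleftrightarrow> finite V \<and> (\<forall>u v. E u v \<longrightarrow> u \<in> V \<and> v \<in> V)
     \<and> (\<forall>u v. E u v \<longrightarrow> E v u) \<and> (\<forall>v. \<not> E v v)"

definition degree :: "'a set \<Rightarrow> ('a \<Rightarrow> 'a \<Rightarrow> bool) \<Rightarrow> 'a \<Rightarrow> nat" where
  "degree V E v = card {u \<in> V. E v u}"

definition min_degree_ge :: "'a set \<Rightarrow> ('a \<Rightarrow> 'a \<Rightarrow> bool) \<Rightarrow> nat \<Rightarrow> bool" where
  "min_degree_ge V E k \<longleftrightarrow> (\<forall>v \<in> V. degree V E v \<ge> k)"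

definition is_path :: "'a set \<Rightarrow> ('a \<Rightarrow> 'a \<Rightarrow> bool) \<Rightarrow> 'a list \<Rightarrow> bool" where
  "is_path V E P \<longleftrightarrow> P \<noteq> [] \<and> distinct P \<and> set P \<subseteq> V
     \<and> (\<forall>i. Suc i < length P \<longrightarrow> E (P ! i) (P ! Suc i))"

definition longest_path_from :: "'a set \<Rightarrow> ('a \<Rightarrow> 'a \<Rightarrow> bool) \<Rightarrow> 'a \<Rightarrow> 'a list \<Rightarrow> bool" where
  "longest_path_from V E x0 P \<longleftrightarrow> is_path V E P \<and> hd P = x0
     \<and> (\<forall>Q. is_path V E Q \<and> hd Q = x0 \<longrightarrow> length Q \<le> length P)"

text \<open>Rotation: Q = x_0..x_h, edge {x_h, x_i} with i < h - 1, gives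
  Q' = x_0..x_i x_h x_{h-1} .. x_{i+1}.\<close>
definition rotation :: "('a \<Rightarrow> 'a \<Rightarrow> bool) \<Rightarrow> 'a list \<Rightarrow> 'a list \<Rightarrow> bool" where
  "rotation E Q Q' \<longleftrightarrow> (\<exists>i. Suc i < length Q - 1 \<and> E (last Q) (Q ! i)
     \<and> Q' = take (Suc i) Q @ rev (drop (Suc i) Q))"

definition posa_S :: "('a \<Rightarrow> 'a \<Rightarrow> bool) \<Rightarrow> 'a list \<Rightarrow> 'a set" where
  "posa_S E P = {last Q | Q. (rotation E)\<^sup>*\<^sup>* P Q}"

definition posa_T :: "'a set \<Rightarrow> ('a \<Rightarrow> 'a \<Rightarrow> bool) \<Rightarrow> 'a list \<Rightarrow> 'a set" where
  "posa_T V E P = {v \<in> V. v \<notin> posa_S E P \<and> (\<exists>s \<in> posa_S E P. E s v)}"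

definition edges_in :: "('a \<Rightarrow> 'a \<Rightarrow> bool) \<Rightarrow> 'a set \<Rightarrow> nat" where
  "edges_in E A = card {{u, v} | u v. u \<in> A \<and> v \<in> A \<and> E u v}"

end

theory Submission
  imports Defs
begin

fun adjs :: "'a list \<Rightarrow> 'a set set" where
  "adjs (x # y # zs) = insert {x, y} (adjs (y # zs))"
| "adjs _ = {}"

lemma adjs_Cons: "xs \<noteq> [] \<Longrightarrow> adjs (x # xs) = insert {x, hd xs} (adjs xs)"
  by (cases xs) auto

lemma adjs_append:
  "xs \<noteq> [] \<Longrightarrow> ys \<noteq> [] \<Longrightarrow> adjs (xs @ ys) = adjs xs \<union> adjs ys \<union> {{last xs, hd ys}}"
proof (induction xs)
  case Nil then show ?case by simp
next
  case (Cons x xs)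
  show ?case
  proof (cases "xs = []")
    case True
    then show ?thesis using Cons.prems by (simp add: adjs_Cons)
  next
    case False
    have "adjs ((x # xs) @ ys) = insert {x, hd xs} (adjs (xs @ ys))"
      using False by (simp add: adjs_Cons)
    also have "\<dots> = insert {x, hd xs} (adjs xs \<union> adjs ys \<union> {{last xs, hd ys}})"
      using Cons.IH False Cons.prems by simp
    finally show ?thesis using False by (auto simp: adjs_Cons)
  qed
qed

lemma adjs_rev: "adjs (rev xs) = adjs xs"
proof (induction xs)
  case Nil then show ?case by simp
next
  case (Cons x xs)
  show ?case
  proof (cases "xs = []")
    case True then show ?thesis by simp
  next
    case False
    have "adjs (rev (x # xs)) = adjs (rev xs @ [x])" by simp
    also have "\<dots> = adjs (rev xs) \<union> {{last (rev xs), x}}"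
      using False by (simp add: adjs_append)
    also have "\<dots> = adjs xs \<union> {{hd xs, x}}" using Cons.IH False by (simp add: last_rev)
    finally show ?thesis using False by (auto simp: adjs_Cons insert_commute)
  qed
qed

lemma adjs_nth: "e \<in> adjs xs \<longleftrightarrow> (\<exists>i. Suc i < length xs \<and> e = {xs ! i, xs ! Suc i})"
proof (induction xs rule: adjs.induct)
  case (1 x y zs)
  show ?case
  proof
    assume "e \<in> adjs (x # y # zs)"
    then consider "e = {x, y}" | "e \<in> adjs (y # zs)" by auto
    then show "\<exists>i. Suc i < length (x # y # zs) \<and> e = {(x # y # zs) ! i, (x # y # zs) ! Suc i}"
    proof cases
      case 1 then show ?thesis by (intro exI[of _ 0]) auto
    next
      case 2
      then obtain i where "Suc i < length (y # zs)" "e = {(y # zs) ! i, (y # zs) ! Suc i}"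
        using "1.IH" by blast
      then show ?thesis by (intro exI[of _ "Suc i"]) auto
    qed
  next
    assume "\<exists>i. Suc i < length (x # y # zs) \<and> e = {(x # y # zs) ! i, (x # y # zs) ! Suc i}"
    then obtain i where i: "Suc i < length (x # y # zs)" "e = {(x # y # zs) ! i, (x # y # zs) ! Suc i}" by blast
    show "e \<in> adjs (x # y # zs)"
    proof (cases i)
      case 0 then show ?thesis using i by simp
    next
      case (Suc j)
      then have "Suc j < length (y # zs)" "e = {(y # zs) ! j, (y # zs) ! Suc j}" using i by auto
      then show ?thesis using "1.IH" by auto
    qed
  qed
qed auto

lemma adjs_set: "{u, v} \<in> adjs xs \<Longrightarrow> u \<in> set xs"
  by (auto simp: adjs_nth doubleton_eq_iff)

lemma adjs_distinct_nth:
  assumes "distinct xs" "i < length xs"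
  shows "{xs ! i, t} \<in> adjs xs \<longleftrightarrow> (0 < i \<and> t = xs ! (i - 1)) \<or> (Suc i < length xs \<and> t = xs ! Suc i)"
proof
  assume "{xs ! i, t} \<in> adjs xs"
  then obtain j where j: "Suc j < length xs" "{xs ! i, t} = {xs ! j, xs ! Suc j}"
    by (auto simp: adjs_nth)
  then consider "xs ! i = xs ! j" "t = xs ! Suc j" | "xs ! i = xs ! Suc j" "t = xs ! j"
    by (auto simp: doubleton_eq_iff)
  then show "(0 < i \<and> t = xs ! (i - 1)) \<or> (Suc i < length xs \<and> t = xs ! Suc i)"
  proof cases
    case 1
    then have "i = j" using assms j by (simp add: nth_eq_iff_index_eq)
    then show ?thesis using 1 j by auto
  next
    case 2
    then have "i = Suc j" using assms j by (simp add: nth_eq_iff_index_eq)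
    then show ?thesis using 2 j by auto
  qed
next
  assume "(0 < i \<and> t = xs ! (i - 1)) \<or> (Suc i < length xs \<and> t = xs ! Suc i)"
  then show "{xs ! i, t} \<in> adjs xs"
  proof
    assume a: "0 < i \<and> t = xs ! (i - 1)"
    then have "{xs ! i, t} = {xs ! (i - 1), xs ! Suc (i - 1)}" by auto
    moreover have "Suc (i - 1) < length xs" using a assms by auto
    ultimately show ?thesis by (auto simp: adjs_nth)
  next
    assume "Suc i < length xs \<and> t = xs ! Suc i"
    then show ?thesis by (auto simp: adjs_nth)
  qed
qed

lemma edges_adjs:
  assumes "\<And>u v. E u v \<Longrightarrow> E v u"
  shows "(\<forall>i. Suc i < length xs \<longrightarrow> E (xs ! i) (xs ! Suc i)) \<longleftrightarrow> (\<forall>u v. {u, v} \<in> adjs xs \<longrightarrow> E u v)"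
proof
  assume h: "\<forall>i. Suc i < length xs \<longrightarrow> E (xs ! i) (xs ! Suc i)"
  show "\<forall>u v. {u, v} \<in> adjs xs \<longrightarrow> E u v"
  proof (intro allI impI)
    fix u v assume "{u, v} \<in> adjs xs"
    then obtain i where "Suc i < length xs" "{u, v} = {xs ! i, xs ! Suc i}" by (auto simp: adjs_nth)
    then show "E u v" using h assms by (auto simp: doubleton_eq_iff)
  qed
next
  assume h: "\<forall>u v. {u, v} \<in> adjs xs \<longrightarrow> E u v"
  show "\<forall>i. Suc i < length xs \<longrightarrow> E (xs ! i) (xs ! Suc i)"
    using h by (auto simp: adjs_nth)
qed

definition rot :: "'a list \<Rightarrow> nat \<Rightarrow> 'a list" where
  "rot Q i = take (Suc i) Q @ rev (drop (Suc i) Q)"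

lemma rot_basic:
  assumes "Suc i < length Q - 1"
  shows "length (rot Q i) = length Q" "set (rot Q i) = set Q"
    "distinct Q \<Longrightarrow> distinct (rot Q i)" "hd (rot Q i) = hd Q" "last (rot Q i) = Q ! Suc i"
    "take (Suc i) (rot Q i) = take (Suc i) Q"
proof -
  show "length (rot Q i) = length Q" using assms by (simp add: rot_def)
  show "set (rot Q i) = set Q" by (metis rot_def append_take_drop_id set_append set_rev)
  show "distinct Q \<Longrightarrow> distinct (rot Q i)"
    by (metis rot_def append_take_drop_id distinct_append distinct_rev set_rev)
  show "hd (rot Q i) = hd Q" using assms by (cases Q) (auto simp: rot_def)
  show "last (rot Q i) = Q ! Suc i" using assms
    by (simp add: rot_def last_rev hd_drop_conv_nth)
  show "take (Suc i) (rot Q i) = take (Suc i) Q" using assms by (simp add: rot_def)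
qed

lemma rot_adjs:
  assumes "Suc i < length Q - 1"
  shows "adjs Q = adjs (take (Suc i) Q) \<union> adjs (drop (Suc i) Q) \<union> {{Q ! i, Q ! Suc i}}"
    "adjs (rot Q i) = adjs (take (Suc i) Q) \<union> adjs (drop (Suc i) Q) \<union> {{Q ! i, last Q}}"
proof -
  have ne1: "take (Suc i) Q \<noteq> []" using assms by auto
  have ne2: "drop (Suc i) Q \<noteq> []" using assms by auto
  have l1: "last (take (Suc i) Q) = Q ! i" using assms ne1 by (subst last_conv_nth) (auto simp: min_def)
  have h2: "hd (drop (Suc i) Q) = Q ! Suc i" using assms by (simp add: hd_drop_conv_nth)
  have "adjs Q = adjs (take (Suc i) Q @ drop (Suc i) Q)" by simp
  then show "adjs Q = adjs (take (Suc i) Q) \<union> adjs (drop (Suc i) Q) \<union> {{Q ! i, Q ! Suc i}}"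
    using adjs_append[OF ne1 ne2] l1 h2 by simp
  have "hd (rev (drop (Suc i) Q)) = last Q" using ne2 by (simp add: hd_rev)
  then show "adjs (rot Q i) = adjs (take (Suc i) Q) \<union> adjs (drop (Suc i) Q) \<union> {{Q ! i, last Q}}"
    unfolding rot_def using adjs_append[OF ne1] ne2 l1 by (simp add: adjs_rev)
qed

lemma handshake:
  assumes fA: "finite A" and sy: "\<And>u v. E u v \<Longrightarrow> E v u" and ir: "\<And>v. \<not> E v v"
  shows "2 * edges_in E A = (\<Sum>v\<in>A. card {u \<in> A. E v u})"
proof -
  define D where "D = Sigma A (\<lambda>v. {u \<in> A. E v u})"
  define Ed where "Ed = {{u, v} | u v. u \<in> A \<and> v \<in> A \<and> E u v}"
  define f where "f = (\<lambda>(x::'a, y::'a). {x, y})"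
  have fD: "finite D" unfolding D_def using fA by auto
  have cD: "card D = (\<Sum>v\<in>A. card {u \<in> A. E v u})" unfolding D_def using fA by simp
  have EdD: "Ed = f ` D" unfolding Ed_def D_def f_def by auto
  have fEd: "finite Ed" using EdD fD by simp
  have sub: "f ` D \<subseteq> Ed" using EdD by simp
  have fib: "card {x \<in> D. f x = e} = 2" if ein: "e \<in> Ed" for e
  proof -
    obtain a b where ab: "e = {a, b}" "a \<in> A" "b \<in> A" "E a b" using ein unfolding Ed_def by blast
    have "a \<noteq> b" using ab ir by auto
    have "{x \<in> D. f x = e} = {(a, b), (b, a)}"
      using ab sy unfolding D_def f_def by (auto simp: doubleton_eq_iff)
    then show ?thesis using \<open>a \<noteq> b\<close> by simp
  qed
  have "card D = (\<Sum>x\<in>D. (1::nat))" by simp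
  also have "\<dots> = (\<Sum>e\<in>Ed. \<Sum>x\<in>{x \<in> D. f x = e}. (1::nat))"
    using sum.group[OF fD fEd sub, of "\<lambda>_. (1::nat)"] by simp
  also have "\<dots> = (\<Sum>e\<in>Ed. 2)" using fib by (intro sum.cong) auto
  also have "\<dots> = 2 * card Ed" by simp
  finally show ?thesis using cD unfolding edges_in_def Ed_def by simp
qed

lemma double_count:
  assumes "finite A" "finite B"
  shows "(\<Sum>a\<in>A. card {b \<in> B. R a b}) = (\<Sum>b\<in>B. card {a \<in> A. R a b})"
proof -
  have "(\<Sum>a\<in>A. card {b \<in> B. R a b}) = (\<Sum>a\<in>A. \<Sum>b\<in>B. if R a b then 1 else 0)"
    using assms by (simp add: sum.inter_filter[symmetric])
  also have "\<dots> = (\<Sum>b\<in>B. \<Sum>a\<in>A. if R a b then 1 else 0)" by (rule sum.swap)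
  also have "\<dots> = (\<Sum>b\<in>B. card {a \<in> A. R a b})"
    using assms by (simp add: sum.inter_filter[symmetric])
  finally show ?thesis .
qed

locale posa =
  fixes V :: "'a set" and E :: "'a \<Rightarrow> 'a \<Rightarrow> bool" and x0 :: 'a and P :: "'a list"
  assumes sg: "simple_graph V E"
    and md: "min_degree_ge V E 3"
    and x0V: "x0 \<in> V"
    and lp: "longest_path_from V E x0 P"
begin

abbreviation "C Q \<equiv> (rotation E)\<^sup>*\<^sup>* P Q"
abbreviation "S \<equiv> posa_S E P"
abbreviation "T \<equiv> posa_T V E P"
abbreviation "H \<equiv> S \<union> T"

lemma symE: "E u v \<Longrightarrow> E v u" using sg by (auto simp: simple_graph_def)
lemma irrE: "\<not> E v v" using sg by (auto simp: simple_graph_def)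
lemma EV: "E u v \<Longrightarrow> u \<in> V \<and> v \<in> V" using sg by (auto simp: simple_graph_def)
lemma finV: "finite V" using sg by (auto simp: simple_graph_def)

lemma deg3: "v \<in> V \<Longrightarrow> 3 \<le> card {u \<in> V. E v u}"
  using md by (auto simp: min_degree_ge_def degree_def)

lemma P_path: "is_path V E P" "hd P = x0"
  using lp by (auto simp: longest_path_from_def)

lemma path_adjs_E: "is_path V E Q \<Longrightarrow> {u, v} \<in> adjs Q \<Longrightarrow> E u v"
  using edges_adjs[of E Q] symE by (auto simp: is_path_def)

lemma rotation_rot: "rotation E Q Q' \<longleftrightarrow> (\<exists>i. Suc i < length Q - 1 \<and> E (last Q) (Q ! i) \<and> Q' = rot Q i)"
  by (simp add: rotation_def rot_def)

lemma rot_path: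
  assumes "is_path V E Q" "Suc i < length Q - 1" "E (last Q) (Q ! i)"
  shows "is_path V E (rot Q i)"
proof -
  have "\<forall>u v. {u, v} \<in> adjs (rot Q i) \<longrightarrow> E u v"
  proof (intro allI impI)
    fix u v assume a: "{u, v} \<in> adjs (rot Q i)"
    show "E u v"
    proof (cases "{u, v} = {Q ! i, last Q}")
      case True then show ?thesis using assms(3) symE by (auto simp: doubleton_eq_iff)
    next
      case False
      then have "{u, v} \<in> adjs Q" using a rot_adjs[OF assms(2)] by auto
      then show ?thesis using path_adjs_E assms(1) by blast
    qed
  qed
  then show ?thesis using assms rot_basic[OF assms(2)] edges_adjs[of E "rot Q i"] symE
    by (auto simp: is_path_def)
qed

lemma class_inv:
  assumes "C Q"
  shows "is_path V E Q \<and> hd Q = x0 \<and> length Q = length P \<and> set Q = set P"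
  using assms
proof induction
  case base then show ?case using P_path by simp
next
  case (step Q Q')
  then obtain i where i: "Suc i < length Q - 1" "E (last Q) (Q ! i)" "Q' = rot Q i"
    by (auto simp: rotation_rot)
  then show ?case using step.IH rot_path[of Q i] rot_basic[OF i(1)] by auto
qed

lemma class_longest: "C Q \<Longrightarrow> longest_path_from V E x0 Q"
  using class_inv[of Q] lp by (auto simp: longest_path_from_def)

lemma nbr_in:
  assumes "C Q" "E (last Q) y"
  shows "y \<in> set Q"
proof (rule ccontr)
  assume ny: "y \<notin> set Q"
  have pQ: "is_path V E Q" and hQ: "hd Q = x0" using class_inv[OF assms(1)] by auto
  have ne: "Q \<noteq> []" using pQ by (auto simp: is_path_def)
  have "\<forall>u v. {u, v} \<in> adjs (Q @ [y]) \<longrightarrow> E u v"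
  proof (intro allI impI)
    fix u v assume "{u, v} \<in> adjs (Q @ [y])"
    then have "{u, v} \<in> adjs Q \<or> {u, v} = {last Q, y}" using adjs_append[OF ne, of "[y]"] by auto
    then show "E u v" using path_adjs_E[OF pQ] assms(2) symE by (auto simp: doubleton_eq_iff)
  qed
  then have "is_path V E (Q @ [y])" using pQ ny EV[OF assms(2)] edges_adjs[of E "Q @ [y]"] symE
    by (auto simp: is_path_def)
  moreover have "hd (Q @ [y]) = x0" using hQ ne by simp
  ultimately have "length (Q @ [y]) \<le> length Q" using class_longest[OF assms(1)]
    by (auto simp: longest_path_from_def)
  then show False by simp
qed

lemma S_iff: "s \<in> S \<longleftrightarrow> (\<exists>Q. C Q \<and> last Q = s)"
  by (auto simp: posa_S_def)

lemma T_iff: "t \<in> T \<longleftrightarrow> t \<in> V \<and> t \<notin> S \<and> (\<exists>s\<in>S. E s t)"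
  by (auto simp: posa_T_def)

lemma S_setP: "s \<in> S \<Longrightarrow> s \<in> set P"
proof -
  assume "s \<in> S"
  then obtain Q where "C Q" "last Q = s" by (auto simp: S_iff)
  then show ?thesis using class_inv[of Q] by (metis empty_iff empty_set is_path_def last_in_set)
qed

lemma setP_V: "set P \<subseteq> V" using P_path by (auto simp: is_path_def)

lemma H_V: "H \<subseteq> V" using S_setP setP_V by (auto simp: T_iff)
lemma finH: "finite H" using H_V finV finite_subset by blast
lemma finS: "finite S" using finH by (rule finite_subset[rotated]) auto
lemma finT: "finite T" using finH by (rule finite_subset[rotated]) auto
lemma ST_disj: "S \<inter> T = {}" by (auto simp: T_iff)

lemma nbrS: "s \<in> S \<Longrightarrow> E s u \<Longrightarrow> u \<in> H"
  using EV by (auto simp: T_iff)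

lemma lastP_S: "last P \<in> S" by (auto simp: S_iff)

lemma lenP: "2 \<le> length P"
proof -
  have "3 \<le> card {u \<in> V. E x0 u}" using deg3 x0V by simp
  then obtain y where y: "E x0 y" by (metis (no_types, lifting) Collect_empty_eq card.empty not_numeral_le_zero)
  have "is_path V E [x0, y]" using y EV irrE by (auto simp: is_path_def nth_Cons split: nat.splits)
  then show ?thesis using lp by (force simp: longest_path_from_def)
qed

lemma x0_notS: "x0 \<notin> S"
proof
  assume "x0 \<in> S"
  then obtain Q where Q: "C Q" "last Q = x0" by (auto simp: S_iff)
  have "is_path V E Q" "hd Q = x0" "length Q = length P" using class_inv[OF Q(1)] by auto
  then have d: "distinct Q" "2 \<le> length Q" "Q ! 0 = x0" "Q ! (length Q - 1) = x0" using lenP Q(2)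
    by (auto simp: is_path_def hd_conv_nth last_conv_nth)
  moreover have "length Q - 1 < length Q" "0 < length Q" using d(2) by auto
  ultimately have "length Q - 1 = 0" using nth_eq_iff_index_eq by metis
  then show False using d(2) by simp
qed

lemma rot_step:
  assumes "C Q" "E (last Q) y" "y \<noteq> Q ! (length Q - 2)"
  shows "\<exists>i. Suc i < length Q - 1 \<and> Q ! i = y \<and> C (rot Q i) \<and> Q ! Suc i \<in> S \<and> last (rot Q i) = Q ! Suc i"
proof -
  have pQ: "is_path V E Q" using class_inv[OF assms(1)] by auto
  have ne: "Q \<noteq> []" using pQ by (auto simp: is_path_def)
  obtain i where i: "i < length Q" "Q ! i = y" using nbr_in[OF assms(1,2)] by (auto simp: in_set_conv_nth)
  have "y \<noteq> last Q" using assms(2) irrE by auto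
  then have "i \<noteq> length Q - 1" using i ne by (auto simp: last_conv_nth)
  then have si: "Suc i < length Q - 1" using i assms(3) by (cases "i = length Q - 2") auto
  have "rotation E Q (rot Q i)" using si assms(2) i by (auto simp: rotation_rot)
  then have C': "C (rot Q i)" by (meson assms(1) rtranclp.rtrancl_into_rtrancl)
  then have "last (rot Q i) \<in> S" by (auto simp: S_iff)
  then show ?thesis using si i C' rot_basic(5)[OF si] by auto
qed


definition dq :: "'a list \<Rightarrow> 'a \<Rightarrow> nat" where
  "dq Q v = card {u \<in> H. {u, v} \<in> adjs Q}"

lemma dq_rot:
  assumes CQ: "C Q" and si: "Suc i < length Q - 1" and eE: "E (last Q) (Q ! i)"
    and yS: "Q ! Suc i \<in> S" and vS: "v \<notin> S"
  shows "dq (rot Q i) v = dq Q v"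
proof -
  define A where "A = adjs (take (Suc i) Q) \<union> adjs (drop (Suc i) Q)"
  define y where "y = Q ! i"
  define y' where "y' = Q ! Suc i"
  define e where "e = last Q"
  have pQ: "is_path V E Q" using class_inv[OF CQ] by auto
  have dQ: "distinct Q" and neQ: "Q \<noteq> []" using pQ by (auto simp: is_path_def)
  have eS: "e \<in> S" unfolding e_def using CQ by (auto simp: S_iff)
  have y'S: "y' \<in> S" using yS y'_def by simp
  have yH: "y \<in> H" using nbrS[OF eS] eE unfolding e_def y_def by simp
  have aQ: "adjs Q = A \<union> {{y, y'}}" using rot_adjs(1)[OF si] unfolding A_def y_def y'_def by simp
  have aQ': "adjs (rot Q i) = A \<union> {{y, e}}" using rot_adjs(2)[OF si] unfolding A_def y_def e_def by simp
  have disj: "set (take (Suc i) Q) \<inter> set (drop (Suc i) Q) = {}"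
    using dQ by (metis append_take_drop_id distinct_append)
  have y_take: "y \<in> set (take (Suc i) Q)" unfolding y_def using si
    by (auto simp: in_set_conv_nth intro!: exI[of _ i])
  have y'_drop: "y' \<in> set (drop (Suc i) Q)" unfolding y'_def using si
    by (auto simp: in_set_conv_nth intro!: exI[of _ 0])
  have yy'A: "{y', y} \<notin> A"
  proof
    assume "{y', y} \<in> A"
    then have "{y', y} \<in> adjs (take (Suc i) Q) \<or> {y, y'} \<in> adjs (drop (Suc i) Q)"
      unfolding A_def by (auto simp: insert_commute)
    then show False using adjs_set[of y' y] adjs_set[of y y'] disj y_take y'_drop by blast
  qed
  have eyA: "{e, y} \<notin> A"
  proof
    assume "{e, y} \<in> A"
    then have "{e, y} \<in> adjs Q" using aQ by auto
    moreover have "e = Q ! (length Q - 1)" unfolding e_def using neQ by (simp add: last_conv_nth)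
    ultimately have "y = Q ! (length Q - 1 - 1)"
      using adjs_distinct_nth[OF dQ, of "length Q - 1" y] neQ by auto
    then have "i = length Q - 2" unfolding y_def using si dQ by (simp add: nth_eq_iff_index_eq)
    then show False using si by simp
  qed
  show ?thesis
  proof (cases "v = y")
    case False
    have "v \<noteq> y'" "v \<noteq> e" using vS y'S eS by auto
    then have "{u \<in> H. {u, v} \<in> adjs (rot Q i)} = {u \<in> H. {u, v} \<in> adjs Q}"
      using False aQ aQ' by (auto simp: doubleton_eq_iff)
    then show ?thesis by (simp add: dq_def)
  next
    case True
    define B where "B = {u \<in> H. {u, y} \<in> A}"
    have y'ne: "y' \<noteq> y" using disj y_take y'_drop by auto
    have "{u \<in> H. {u, v} \<in> adjs Q} = insert y' B"
      using True aQ y'S y'ne by (auto simp: B_def doubleton_eq_iff)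
    moreover have "{u \<in> H. {u, v} \<in> adjs (rot Q i)} = insert e B"
      using True aQ' eS by (auto simp: B_def doubleton_eq_iff)
    moreover have "finite B" using finH by (auto simp: B_def)
    moreover have "y' \<notin> B" "e \<notin> B" using yy'A eyA by (auto simp: B_def)
    ultimately show ?thesis by (simp add: dq_def)
  qed
qed

lemma dq_inv: "C Q \<Longrightarrow> v \<notin> S \<Longrightarrow> dq Q v = dq P v"
proof (induction rule: rtranclp_induct)
  case base then show ?case by simp
next
  case (step Q Q')
  then obtain i where i: "Suc i < length Q - 1" "E (last Q) (Q ! i)" "Q' = rot Q i"
    by (auto simp: rotation_rot)
  have "C Q'" using step.hyps by (meson rtranclp.rtrancl_into_rtrancl)
  then have "last Q' \<in> S" by (auto simp: S_iff)
  then have "Q ! Suc i \<in> S" using rot_basic(5)[OF i(1)] i(3) by simp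
  then show ?case using dq_rot[OF step.hyps(1) i(1,2)] step i(3) by simp
qed

lemma dq_pos_aux: "u \<in> H \<Longrightarrow> {u, v} \<in> adjs Q \<Longrightarrow> 1 \<le> dq Q v"
proof -
  assume a: "u \<in> H" "{u, v} \<in> adjs Q"
  have f: "finite {u \<in> H. {u, v} \<in> adjs Q}" by (rule finite_subset[OF _ finH]) blast
  have "u \<in> {u \<in> H. {u, v} \<in> adjs Q}" using a by simp
  then have "{u \<in> H. {u, v} \<in> adjs Q} \<noteq> {}" by blast
  then have "0 < card {u \<in> H. {u, v} \<in> adjs Q}" using f by (simp add: card_gt_0_iff)
  then show ?thesis unfolding dq_def by simp
qed

lemma adj_nth_I: "Suc i < length xs \<Longrightarrow> {xs ! i, xs ! Suc i} \<in> adjs xs"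
  by (subst adjs_nth) (rule exI[of _ i], simp)


lemma last2_adj: "C Q \<Longrightarrow> {Q ! (length Q - 2), last Q} \<in> adjs Q"
proof -
  assume CQ: "C Q"
  have "length Q = length P" using class_inv[OF CQ] by blast
  then have l: "2 \<le> length Q" using lenP by linarith
  then have ne: "Q \<noteq> []" by auto
  have a: "Suc (length Q - 2) < length Q" using l by linarith
  have b: "length Q - 1 = Suc (length Q - 2)" using l by linarith
  have "last Q = Q ! (length Q - 1)" using ne by (rule last_conv_nth)
  then have "last Q = Q ! Suc (length Q - 2)" using b by simp
  then show ?thesis using adj_nth_I[OF a] by simp
qed

lemma posa_dq: "t \<in> T \<Longrightarrow> 1 \<le> dq P t"
proof -
  assume tT: "t \<in> T"
  then obtain s where sS: "s \<in> S" and st: "E s t" by (auto simp: T_iff)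
  then obtain Q where CQ: "C Q" and lQ: "last Q = s" by (auto simp: S_iff)
  have tS: "t \<notin> S" using tT by (auto simp: T_iff)
  have "1 \<le> dq Q t"
  proof (cases "t = Q ! (length Q - 2)")
    case True
    then have "{s, t} \<in> adjs Q" using last2_adj[OF CQ] lQ by (simp add: insert_commute)
    then show ?thesis using dq_pos_aux sS by blast
  next
    case False
    then obtain i where i: "Suc i < length Q - 1" "Q ! i = t" "Q ! Suc i \<in> S"
      using rot_step[OF CQ] st lQ by blast
    then have "{Q ! Suc i, t} \<in> adjs Q" using adj_nth_I[of i Q] by (simp add: insert_commute)
    then show ?thesis using dq_pos_aux i(3) by blast
  qed
  then show ?thesis using dq_inv[OF CQ tS] by simp
qed

abbreviation "dH v \<equiv> card {u \<in> H. E v u}"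
abbreviation "L \<equiv> {t \<in> T. dH t \<le> 1}"

lemma path_nth_E: "C Q \<Longrightarrow> Suc i < length Q \<Longrightarrow> E (Q ! i) (Q ! Suc i)"
  using class_inv[of Q] by (auto simp: is_path_def)

lemma leaf_pred:
  assumes CQ: "C Q" and lQ: "last Q = s" and tL: "t \<in> L" and st: "E s t"
  shows "t = Q ! (length Q - 2)"
proof (rule ccontr)
  assume "t \<noteq> Q ! (length Q - 2)"
  then obtain i where i: "Suc i < length Q - 1" "Q ! i = t" "Q ! Suc i \<in> S"
    using rot_step[OF CQ] st lQ by blast
  have dQ: "distinct Q" and ne: "Q \<noteq> []" using class_inv[OF CQ] by (auto simp: is_path_def)
  have "s = Q ! (length Q - 1)" using lQ ne by (simp add: last_conv_nth)
  then have ne2: "Q ! Suc i \<noteq> s" using i(1) dQ by (simp add: nth_eq_iff_index_eq)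
  have sS: "s \<in> S" using CQ lQ by (auto simp: S_iff)
  have "E t (Q ! Suc i)" using path_nth_E[OF CQ, of i] i by simp
  moreover have "E t s" using st symE by simp
  ultimately have "{s, Q ! Suc i} \<subseteq> {u \<in> H. E t u}" using sS i(3) by auto
  then have "card {s, Q ! Suc i} \<le> dH t" using finH by (intro card_mono) auto
  then show False using tL ne2 by simp
qed


lemma dH_S: "s \<in> S \<Longrightarrow> 3 \<le> dH s"
proof -
  assume sS: "s \<in> S"
  then have "s \<in> V" using S_setP setP_V by auto
  have "{u \<in> H. E s u} = {u \<in> V. E s u}" using nbrS[OF sS] H_V EV by auto
  then show ?thesis using deg3[OF \<open>s \<in> V\<close>] by simp
qed

lemma dH_T: "t \<in> T \<Longrightarrow> 1 \<le> dH t"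
proof -
  assume tT: "t \<in> T"
  then obtain s where "s \<in> S" "E s t" by (auto simp: T_iff)
  then have "s \<in> {u \<in> H. E t u}" using symE by auto
  moreover have "finite {u \<in> H. E t u}" by (rule finite_subset[OF _ finH]) blast
  ultimately have "0 < dH t" by (auto simp: card_gt_0_iff)
  then show ?thesis by simp
qed

lemma leaves_le1: "s \<in> S \<Longrightarrow> card {t \<in> L. E s t} \<le> 1"
proof -
  assume "s \<in> S"
  then obtain Q where CQ: "C Q" and lQ: "last Q = s" by (auto simp: S_iff)
  have "{t \<in> L. E s t} \<subseteq> {Q ! (length Q - 2)}" using leaf_pred[OF CQ lQ] by blast
  then have "card {t \<in> L. E s t} \<le> card {Q ! (length Q - 2)}" by (intro card_mono) auto
  then show ?thesis by simp
qed

definition "Bcond \<longleftrightarrow> (\<forall>s\<in>S. dH s = 3) \<and> (\<forall>t\<in>T - L. dH t = 2) \<and> (\<forall>s\<in>S. \<exists>t\<in>L. E s t)"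

lemma count_main: "card H < edges_in E H \<or> Bcond"
proof (rule ccontr)
  assume na: "\<not> (card H < edges_in E H \<or> Bcond)"
  then have le: "edges_in E H \<le> card H" by simp
  have hs: "2 * edges_in E H = (\<Sum>v\<in>H. dH v)" using handshake[OF finH] symE irrE by blast
  define T' where "T' = T - L"
  have fL: "finite L" using finT by simp
  have fT': "finite T'" using finT by (simp add: T'_def)
  have Hsplit: "H = S \<union> (L \<union> T')" unfolding T'_def by auto
  have d1: "S \<inter> (L \<union> T') = {}" unfolding T'_def using ST_disj by blast
  have d2: "L \<inter> T' = {}" unfolding T'_def by auto
  have fLT: "finite (L \<union> T')" using fL fT' by (rule finite_UnI)
  have "(\<Sum>v\<in>H. dH v) = (\<Sum>v\<in>S \<union> (L \<union> T'). dH v)"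
    by (rule arg_cong[where f="\<lambda>X. \<Sum>v\<in>X. dH v", OF Hsplit])
  also have "\<dots> = (\<Sum>v\<in>S. dH v) + ((\<Sum>v\<in>L. dH v) + (\<Sum>v\<in>T'. dH v))"
    by (simp only: sum.union_disjoint[OF finS fLT d1] sum.union_disjoint[OF fL fT' d2])
  finally have sumH: "(\<Sum>v\<in>H. dH v) = (\<Sum>v\<in>S. dH v) + (\<Sum>v\<in>L. dH v) + (\<Sum>v\<in>T'. dH v)"
    by simp
  have "card H = card (S \<union> (L \<union> T'))" by (rule arg_cong[where f=card, OF Hsplit])
  also have "\<dots> = card S + (card L + card T')"
    by (simp only: card_Un_disjoint[OF finS fLT d1] card_Un_disjoint[OF fL fT' d2])
  finally have cardH: "card H = card S + card L + card T'" by simp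
  have sS: "3 * card S \<le> (\<Sum>v\<in>S. dH v)"
    using sum_mono[of S "\<lambda>_. 3" dH] dH_S by simp
  have sL: "card L \<le> (\<Sum>v\<in>L. dH v)"
    using sum_mono[of L "\<lambda>_. 1" dH] dH_T by simp
  have sT: "2 * card T' \<le> (\<Sum>v\<in>T'. dH v)"
  proof -
    have "\<forall>v\<in>T'. 2 \<le> dH v" unfolding T'_def by auto
    then show ?thesis using sum_mono[of T' "\<lambda>_. 2" dH] by simp
  qed
  have Lcov: "L \<subseteq> (\<Union>s\<in>S. {t \<in> L. E s t})" by (auto simp: T_iff)
  have fU: "finite (\<Union>s\<in>S. {t \<in> L. E s t})" by (rule finite_subset[OF _ fL]) blast
  have cL: "card L \<le> (\<Sum>s\<in>S. card {t \<in> L. E s t})"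
    using le_trans[OF card_mono[OF fU Lcov] card_UN_le[OF finS, of "\<lambda>s. {t \<in> L. E s t}"]] .
  have cLS: "(\<Sum>s\<in>S. card {t \<in> L. E s t}) \<le> card S"
    using sum_mono[of S "\<lambda>s. card {t \<in> L. E s t}" "\<lambda>_. 1"] leaves_le1 by simp
  have tot: "(\<Sum>v\<in>H. dH v) \<le> 2 * card H" using hs le by simp
  have B1: "\<forall>s\<in>S. dH s = 3"
  proof (rule ccontr)
    assume "\<not> (\<forall>s\<in>S. dH s = 3)"
    then obtain s where "s \<in> S" "3 < dH s" using dH_S by force
    then have "(\<Sum>v\<in>S. 3) < (\<Sum>v\<in>S. dH v)"
      using sum_strict_mono_ex1[OF finS, of "\<lambda>_. 3" dH] dH_S by auto
    then have "3 * card S < (\<Sum>v\<in>S. dH v)" by simp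
    then show False using sumH cardH sL sT cL cLS tot by linarith
  qed
  have B2: "\<forall>t\<in>T - L. dH t = 2"
  proof (rule ccontr)
    assume "\<not> (\<forall>t\<in>T - L. dH t = 2)"
    then obtain t where "t \<in> T'" "2 < dH t" unfolding T'_def by force
    moreover have "\<forall>v\<in>T'. 2 \<le> dH v" unfolding T'_def by auto
    ultimately have "(\<Sum>v\<in>T'. 2) < (\<Sum>v\<in>T'. dH v)"
      using sum_strict_mono_ex1[OF fT', of "\<lambda>_. 2" dH] by auto
    then have "2 * card T' < (\<Sum>v\<in>T'. dH v)" by simp
    then show False using sumH cardH sL sS cL cLS tot by linarith
  qed
  have B3: "\<forall>s\<in>S. \<exists>t\<in>L. E s t"
  proof (rule ccontr)
    assume "\<not> (\<forall>s\<in>S. \<exists>t\<in>L. E s t)"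
    then obtain s where s: "s \<in> S" "{t \<in> L. E s t} = {}" by blast
    then have "(\<Sum>s\<in>S. card {t \<in> L. E s t}) < (\<Sum>s\<in>S. 1)"
      using sum_strict_mono_ex1[OF finS, of "\<lambda>s. card {t \<in> L. E s t}" "\<lambda>_. 1"] leaves_le1
      by (metis (no_types, lifting) card.empty zero_less_one)
    then have "(\<Sum>s\<in>S. card {t \<in> L. E s t}) < card S" by simp
    then show False using sumH cardH sL sS sT cL tot by linarith
  qed
  have "Bcond" unfolding Bcond_def using B1 B2 B3 by blast
  then show False using na by simp
qed


lemma path_adj_E: "C Q \<Longrightarrow> {u, v} \<in> adjs Q \<Longrightarrow> E u v"
  using class_inv[of Q] path_adjs_E by blast

lemma card_le1_eq: "finite A \<Longrightarrow> card A \<le> 1 \<Longrightarrow> a \<in> A \<Longrightarrow> b \<in> A \<Longrightarrow> a = b"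
  using card_le_Suc0_iff_eq by (metis One_nat_def)

lemma leaf_unique_nbr: "t \<in> L \<Longrightarrow> s \<in> S \<Longrightarrow> E s t \<Longrightarrow> u \<in> H \<Longrightarrow> E t u \<Longrightarrow> u = s"
proof -
  assume a: "t \<in> L" "s \<in> S" "E s t" "u \<in> H" "E t u"
  have f: "finite {w \<in> H. E t w}" by (rule finite_subset[OF _ finH]) blast
  have "s \<in> {w \<in> H. E t w}" "u \<in> {w \<in> H. E t w}" using a symE by auto
  moreover have "card {w \<in> H. E t w} \<le> 1" using a(1) by simp
  ultimately show "u = s" using card_le1_eq[OF f] by blast
qed

lemma last_nth: "C Q \<Longrightarrow> last Q = Q ! (length Q - 1)"
  using class_inv[of Q] by (auto simp: is_path_def last_conv_nth)

lemma dQ: "C Q \<Longrightarrow> distinct Q" using class_inv[of Q] by (auto simp: is_path_def)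
lemma lenQ: "C Q \<Longrightarrow> length Q = length P" using class_inv[of Q] by auto
lemma setQ: "C Q \<Longrightarrow> set Q = set P" using class_inv[of Q] by auto
lemma hdQ: "C Q \<Longrightarrow> Q ! 0 = x0"
  using class_inv[of Q] by (auto simp: is_path_def hd_conv_nth)

lemma dq_ex: "1 \<le> dq Q v \<Longrightarrow> \<exists>u\<in>H. {u, v} \<in> adjs Q"
proof -
  assume "1 \<le> dq Q v"
  then have "{u \<in> H. {u, v} \<in> adjs Q} \<noteq> {}" unfolding dq_def by (metis card.empty not_one_le_zero)
  then show ?thesis by blast
qed

lemma first_H:
  obtains f where "f < length P" "P ! f \<in> H" "\<And>j. j < f \<Longrightarrow> P ! j \<notin> H"
proof -
  have ne: "P \<noteq> []" using lenP by auto
  have "last P = P ! (length P - 1)" using ne by (rule last_conv_nth)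
  then have "P ! (length P - 1) \<in> H" using lastP_S by simp
  moreover have "length P - 1 < length P" using ne by simp
  ultimately have ex: "\<exists>i. i < length P \<and> P ! i \<in> H" by blast
  define f where "f = (LEAST i. i < length P \<and> P ! i \<in> H)"
  have "f < length P \<and> P ! f \<in> H" unfolding f_def using LeastI_ex[OF ex] .
  moreover have "\<And>j. j < f \<Longrightarrow> P ! j \<notin> H"
  proof -
    fix j assume "j < f"
    then have "\<not> (j < length P \<and> P ! j \<in> H)" unfolding f_def by (rule not_less_Least)
    moreover have "j < length P" using \<open>j < f\<close> calculation \<open>f < length P \<and> P ! f \<in> H\<close> by linarith
    ultimately show "P ! j \<notin> H" by blast
  qed
  ultimately show ?thesis using that by blast
qed


lemma first_notS:
  assumes f: "f < length P" and pre: "\<And>j. j < f \<Longrightarrow> P ! j \<notin> H"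
  shows "P ! f \<notin> S"
proof
  assume zS: "P ! f \<in> S"
  show False
  proof (cases f)
    case 0
    then have "P ! f = x0" using hdQ[of P] by simp
    then show False using zS x0_notS by simp
  next
    case (Suc g)
    then have "E (P ! g) (P ! f)" using path_nth_E[of P g] f by simp
    then have "P ! g \<in> H" using nbrS[OF zS] symE by blast
    then show False using pre[of g] Suc by simp
  qed
qed

lemma first_notL:
  assumes f: "f < length P" and zH: "P ! f \<in> H" and pre: "\<And>j. j < f \<Longrightarrow> P ! j \<notin> H"
  shows "P ! f \<notin> L"
proof
  define z where "z = P ! f"
  assume zL: "P ! f \<in> L"
  then have zL': "z \<in> L" unfolding z_def .
  then have zT: "z \<in> T" by simp
  then obtain sz where szS: "sz \<in> S" and Esz: "E sz z" by (auto simp: T_iff)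
  have zS: "z \<notin> S" using zT by (auto simp: T_iff)
  have dP: "distinct P" using dQ[of P] by simp
  obtain u where uH: "u \<in> H" and uadj: "{u, z} \<in> adjs P" using dq_ex posa_dq[OF zT] by blast
  then have "{z, u} \<in> adjs P" by (simp add: insert_commute)
  then have "(0 < f \<and> u = P ! (f - 1)) \<or> (Suc f < length P \<and> u = P ! Suc f)"
    using adjs_distinct_nth[OF dP f] unfolding z_def by blast
  moreover have "\<not> (0 < f \<and> u = P ! (f - 1))" using pre[of "f - 1"] uH by auto
  ultimately have sf: "Suc f < length P" and u: "u = P ! Suc f" by auto
  have "E z u" using path_adj_E[of P z u] \<open>{z, u} \<in> adjs P\<close> by simp
  then have usz: "u = sz" using leaf_unique_nbr[OF zL' szS Esz uH] by simp
  have inv: "take (Suc (Suc f)) Q = take (Suc (Suc f)) P" if CQ: "C Q" for Q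
    using CQ
  proof induction
    case base then show ?case by simp
  next
    case (step Q Q')
    then obtain i where i: "Suc i < length Q - 1" "E (last Q) (Q ! i)" "Q' = rot Q i"
      by (auto simp: rotation_rot)
    have CQ: "C Q" using step.hyps(1) .
    have nth_eq: "Q ! j = P ! j" if "j < Suc (Suc f)" for j
      using step.IH that sf lenQ[OF CQ] by (metis nth_take)
    have lS: "last Q \<in> S" using CQ by (auto simp: S_iff)
    have yH: "Q ! i \<in> H" using nbrS[OF lS i(2)] .
    have "f \<le> i"
    proof (rule ccontr)
      assume "\<not> f \<le> i"
      then have "i < f" by simp
      then show False using pre[of i] nth_eq[of i] yH by simp
    qed
    moreover have "i \<noteq> f"
    proof
      assume iff: "i = f"
      then have "Q ! i = z" using nth_eq[of f] z_def by simp
      then have "E z (last Q)" using i(2) symE by simp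
      then have "last Q = sz" using leaf_unique_nbr[OF zL' szS Esz] lS by blast
      moreover have "Q ! Suc f = sz" using nth_eq[of "Suc f"] u usz by simp
      ultimately have "Q ! Suc f = Q ! (length Q - 1)" using last_nth[OF CQ] by simp
      moreover have "Suc f < length Q" using sf lenQ[OF CQ] by simp
      ultimately have "Suc f = length Q - 1" using dQ[OF CQ] i(1) nth_eq_iff_index_eq[of Q "Suc f" "length Q - 1"] by simp
      then show False using i(1) iff by simp
    qed
    ultimately have "Suc f \<le> i" by simp
    have "take (Suc i) Q' = take (Suc i) Q" using rot_basic(6)[OF i(1)] i(3) by simp
    then have "take (Suc (Suc f)) (take (Suc i) Q') = take (Suc (Suc f)) (take (Suc i) Q)" by simp
    then have "take (Suc (Suc f)) Q' = take (Suc (Suc f)) Q"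
      using \<open>Suc f \<le> i\<close> by (simp add: min_def)
    then show ?case using step.IH by simp
  qed
  obtain Q where CQ: "C Q" and lQ: "last Q = sz" using szS by (auto simp: S_iff)
  have nth_eq: "Q ! j = P ! j" if "j < Suc (Suc f)" for j
    using inv[OF CQ] that sf lenQ[OF CQ] by (metis nth_take)
  have "Q ! Suc f = sz" using nth_eq[of "Suc f"] u usz by simp
  then have "Q ! Suc f = Q ! (length Q - 1)" using last_nth[OF CQ] lQ by simp
  then have lf: "Suc f = length Q - 1" using dQ[OF CQ] sf lenQ[OF CQ] by (simp add: nth_eq_iff_index_eq)
  have szV: "sz \<in> V" using szS S_setP setP_V by auto
  have "{w \<in> V. E sz w} \<subseteq> {z}"
  proof
    fix w assume w: "w \<in> {w \<in> V. E sz w}"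
    then have "w \<in> set Q" using nbr_in[OF CQ] lQ by simp
    then obtain j where j: "j < length Q" "Q ! j = w" by (auto simp: in_set_conv_nth)
    have wH: "w \<in> H" using nbrS[OF szS] w by simp
    have "j \<ge> f" proof (rule ccontr)
      assume "\<not> f \<le> j" then show False using pre[of j] nth_eq[of j] wH j by simp
    qed
    moreover have "j \<noteq> Suc f" using j irrE w lQ last_nth[OF CQ] lf by auto
    ultimately have "j = f" using j lf by linarith
    then show "w \<in> {z}" using j nth_eq[of f] z_def by simp
  qed
  then have "card {w \<in> V. E sz w} \<le> 1" by (metis card.empty card.insert empty_iff finite.emptyI insert_absorb card_mono finite.insertI One_nat_def)
  then show False using deg3[OF szV] by simp
qed


lemma B_leaf: "Bcond \<Longrightarrow> s \<in> S \<Longrightarrow> \<exists>t\<in>L. E s t"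
  unfolding Bcond_def by blast

lemma B_deg3: "Bcond \<Longrightarrow> s \<in> S \<Longrightarrow> card {u \<in> V. E s u} = 3"
proof -
  assume B: "Bcond" and sS: "s \<in> S"
  have eq: "{u \<in> H. E s u} = {u \<in> V. E s u}" using nbrS[OF sS] H_V EV by auto
  have "card {u \<in> H. E s u} = 3" using B sS unfolding Bcond_def by blast
  then show ?thesis unfolding eq .
qed

lemma B_deg2: "Bcond \<Longrightarrow> t \<in> T - L \<Longrightarrow> dH t = 2"
  unfolding Bcond_def by blast

lemma end_leaf:
  assumes B: "Bcond" and CQ: "C Q" and lQ: "last Q = s"
  obtains l where "l \<in> L" "E s l" "l = Q ! (length Q - 2)"
proof -
  have sS: "s \<in> S" using CQ lQ by (auto simp: S_iff)
  obtain l where "l \<in> L" "E s l" using B_leaf[OF B sS] by blast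
  then show ?thesis using that leaf_pred[OF CQ lQ] by blast
qed

lemma Tp_nbrs:
  assumes B: "Bcond" and tT: "t \<in> T - L" and aS: "a \<in> S" and Eat: "E a t"
  shows "\<exists>b\<in>S. b \<noteq> a \<and> {u \<in> H. E t u} = {a, b} \<and> (\<forall>Q. C Q \<longrightarrow> dq Q t = 1)"
proof -
  obtain Q where CQ: "C Q" and lQ: "last Q = a" using aS by (auto simp: S_iff)
  obtain l where lL: "l \<in> L" "E a l" and l: "l = Q ! (length Q - 2)" using end_leaf[OF B CQ lQ] by blast
  have tnl: "t \<noteq> Q ! (length Q - 2)" using tT lL l by auto
  obtain i where i: "Suc i < length Q - 1" "Q ! i = t" "Q ! Suc i \<in> S"
    using rot_step[OF CQ _ tnl] Eat lQ by auto
  define b where "b = Q ! Suc i"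
  have bS: "b \<in> S" using i b_def by simp
  have "b \<noteq> Q ! (length Q - 1)" unfolding b_def using dQ[OF CQ] i(1) nth_eq_iff_index_eq[of Q "Suc i" "length Q - 1"] by auto
  then have ba: "b \<noteq> a" using last_nth[OF CQ] lQ by simp
  have Etb: "E t b" unfolding b_def using path_nth_E[OF CQ, of i] i by simp
  have sub: "{a, b} \<subseteq> {u \<in> H. E t u}" using aS bS Etb Eat symE by auto
  have fin: "finite {u \<in> H. E t u}" by (rule finite_subset[OF _ finH]) blast
  have "card {a, b} = 2" using ba by simp
  then have eq: "{u \<in> H. E t u} = {a, b}" using card_seteq[OF fin sub] B_deg2[OF B tT] by simp
  have tS: "t \<notin> S" using tT by (auto simp: T_iff)
  have "{u \<in> H. {u, t} \<in> adjs Q} \<subseteq> {b}"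
  proof
    fix u assume u: "u \<in> {u \<in> H. {u, t} \<in> adjs Q}"
    then have "E t u" using path_adj_E[OF CQ, of t u] by (simp add: insert_commute)
    then have "u \<in> {a, b}" using eq u by blast
    moreover have "u \<noteq> a"
    proof
      assume "u = a"
      then have "{Q ! (length Q - 1), t} \<in> adjs Q" using u last_nth[OF CQ] lQ by simp
      moreover have "length Q - 1 < length Q" using lenQ[OF CQ] lenP by simp
      ultimately have "t = Q ! (length Q - 1 - 1)"
        using adjs_distinct_nth[OF dQ[OF CQ], of "length Q - 1" t] by auto
      then show False using tnl by (simp add: numeral_2_eq_2)
    qed
    ultimately show "u \<in> {b}" by simp
  qed
  then have "card {u \<in> H. {u, t} \<in> adjs Q} \<le> card {b}" by (intro card_mono) auto
  then have "dq Q t \<le> 1" unfolding dq_def by simp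
  then have "dq P t \<le> 1" using dq_inv[OF CQ tS] by simp
  moreover have "1 \<le> dq P t" using posa_dq tT by simp
  ultimately have dP1: "dq P t = 1" by simp
  have "\<forall>Q. C Q \<longrightarrow> dq Q t = 1"
  proof (intro allI impI)
    fix Q' assume "C Q'"
    then show "dq Q' t = 1" using dq_inv[OF \<open>C Q'\<close> tS] dP1 by simp
  qed
  then show ?thesis using bS ba eq by blast
qed

lemma Salt_nbrs:
  assumes B: "Bcond" and sS: "s \<in> S" and pT: "p \<in> T - L" and Esp: "E s p"
  obtains l q where "l \<in> L" "E s l" "q \<in> T - L" "q \<noteq> p" "E s q" "{u \<in> V. E s u} = {l, p, q}"
proof -
  obtain l where lL: "l \<in> L" and Esl: "E s l" using B_leaf[OF B sS] by blast
  define N where "N = {u \<in> V. E s u}"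
  have fN: "finite N" unfolding N_def using finV by simp
  have c3: "card N = 3" unfolding N_def using B_deg3[OF B sS] .
  have lp: "l \<noteq> p" using lL pT by auto
  have lN: "l \<in> N" "p \<in> N" unfolding N_def using Esl Esp EV by auto
  have "\<not> N \<subseteq> {l, p}"
  proof
    assume "N \<subseteq> {l, p}"
    then have "card N \<le> card {l, p}" by (intro card_mono) auto
    then show False using c3 lp by simp
  qed
  then obtain q where qN: "q \<in> N" and qnl: "q \<noteq> l" and qnp: "q \<noteq> p" by blast
  have Nq: "N = {l, p, q}"
  proof -
    have sub: "{l, p, q} \<subseteq> N" using lN qN by auto
    have "card {l, p, q} = 3" using lp qnl qnp by simp
    then show ?thesis using card_seteq[OF fN sub] c3 by simp
  qed
  have Esq: "E s q" using qN N_def by simp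
  have qH: "q \<in> H" using nbrS[OF sS Esq] .
  have qnL: "q \<notin> L"
  proof
    assume qL: "q \<in> L"
    obtain Q where CQ: "C Q" and lQ: "last Q = s" using sS by (auto simp: S_iff)
    have "q = Q ! (length Q - 2)" "l = Q ! (length Q - 2)"
      using leaf_pred[OF CQ lQ qL Esq] leaf_pred[OF CQ lQ lL Esl] by auto
    then show False using qnl by simp
  qed
  have qnS: "q \<notin> S"
  proof
    assume qS: "q \<in> S"
    obtain Q where CQ: "C Q" and lQ: "last Q = q" using qS by (auto simp: S_iff)
    obtain lq where "lq \<in> L" "lq = Q ! (length Q - 2)" using end_leaf[OF B CQ lQ] by blast
    then have snl: "s \<noteq> Q ! (length Q - 2)" using sS by (auto simp: T_iff)
    obtain i where i: "Suc i < length Q - 1" "Q ! i = s" "Q ! Suc i \<in> S"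
      using rot_step[OF CQ _ snl] Esq symE lQ by auto
    have "Q ! Suc i \<noteq> Q ! (length Q - 1)" using dQ[OF CQ] i(1) nth_eq_iff_index_eq[of Q "Suc i" "length Q - 1"] by auto
    then have ynq: "Q ! Suc i \<noteq> q" using last_nth[OF CQ] lQ by simp
    have "E s (Q ! Suc i)" using path_nth_E[OF CQ, of i] i by simp
    then have "Q ! Suc i \<in> N" unfolding N_def using EV by auto
    then have "Q ! Suc i \<in> {l, p}" using Nq ynq by simp
    then show False using i(3) lL pT by (auto simp: T_iff)
  qed
  have "q \<in> T - L" using qH qnS qnL by simp
  then show ?thesis using that lL Esl qnp Esq Nq N_def by blast
qed


lemma end_count:
  assumes B: "Bcond" and CQ: "C Q"
  shows "{t \<in> T - L. {last Q, t} \<in> adjs Q} = {}"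
proof -
  obtain l where lL: "l \<in> L" and l: "l = Q ! (length Q - 2)" using end_leaf[OF B CQ refl] by blast
  have "t \<notin> T - L" if "{last Q, t} \<in> adjs Q" for t
  proof -
    have "{Q ! (length Q - 1), t} \<in> adjs Q" using that last_nth[OF CQ] by simp
    moreover have "length Q - 1 < length Q" using lenQ[OF CQ] lenP by simp
    ultimately have "t = Q ! (length Q - 1 - 1)"
      using adjs_distinct_nth[OF dQ[OF CQ], of "length Q - 1" t] by auto
    then have "t = l" using l by (simp add: numeral_2_eq_2)
    then show ?thesis using lL by simp
  qed
  then show ?thesis by blast
qed

lemma interior_count:
  assumes B: "Bcond" and CQ: "C Q" and sS: "s \<in> S" and pT: "p \<in> T - L" and Esp: "E s p"
    and snl: "s \<noteq> last Q"
  shows "card {t \<in> T - L. {s, t} \<in> adjs Q} = 1"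
proof -
  obtain l q where lL: "l \<in> L" and Esl: "E s l" and qT: "q \<in> T - L" and qp: "q \<noteq> p"
    and Esq: "E s q" and N: "{u \<in> V. E s u} = {l, p, q}"
    using Salt_nbrs[OF B sS pT Esp] by blast
  have "s \<in> set Q" using S_setP[OF sS] setQ[OF CQ] by simp
  then obtain j where j: "j < length Q" "Q ! j = s" by (auto simp: in_set_conv_nth)
  have j0: "0 < j"
  proof (rule ccontr)
    assume "\<not> 0 < j" then have "s = x0" using j hdQ[OF CQ] by simp
    then show False using sS x0_notS by simp
  qed
  have jl: "Suc j < length Q"
  proof (rule ccontr)
    assume "\<not> Suc j < length Q" then have "j = length Q - 1" using j by simp
    then show False using snl j last_nth[OF CQ] by simp
  qed
  define A where "A = Q ! (j - 1)"
  define Bv where "Bv = Q ! Suc j"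
  have adj_iff: "{s, t} \<in> adjs Q \<longleftrightarrow> t = A \<or> t = Bv" for t
    using adjs_distinct_nth[OF dQ[OF CQ] j(1), of t] j j0 jl unfolding A_def Bv_def by auto
  have AB: "A \<noteq> Bv" unfolding A_def Bv_def using dQ[OF CQ] j0 jl
    nth_eq_iff_index_eq[of Q "j - 1" "Suc j"] by auto
  have AN: "A \<in> {u \<in> V. E s u}" "Bv \<in> {u \<in> V. E s u}"
    using adj_iff[of A] adj_iff[of Bv] path_adj_E[OF CQ, of s A] path_adj_E[OF CQ, of s Bv] EV by auto
  have lS: "l \<notin> S" using lL by (auto simp: T_iff)
  have lT: "l \<in> T" using lL by simp
  obtain u where uH: "u \<in> H" and ul: "{u, l} \<in> adjs Q"
    using dq_ex[of Q l] posa_dq[OF lT] dq_inv[OF CQ lS] by auto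
  have "E l u" using path_adj_E[OF CQ, of l u] ul by (simp add: insert_commute)
  then have "u = s" using leaf_unique_nbr[OF lL sS Esl uH] by simp
  then have "l = A \<or> l = Bv" using adj_iff[of l] ul by simp
  then have eq: "{t \<in> T - L. {s, t} \<in> adjs Q} = {A, Bv} \<inter> (T - L)" using adj_iff by auto
  show ?thesis
  proof (cases "l = A")
    case True
    then have "Bv \<in> {p, q}" using AN(2) N AB by auto
    then have "{A, Bv} \<inter> (T - L) = {Bv}" using True lL pT qT by auto
    then show ?thesis using eq by simp
  next
    case False
    then have lB: "l = Bv" using \<open>l = A \<or> l = Bv\<close> by simp
    then have "A \<in> {p, q}" using AN(1) N AB by auto
    then have "{A, Bv} \<inter> (T - L) = {A}" using lB lL pT qT by auto
    then show ?thesis using eq by simp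
  qed
qed

lemma T_nbr: "t \<in> T \<Longrightarrow> \<exists>s\<in>S. E s t" by (simp add: T_iff)
lemma T_notS: "t \<in> T \<Longrightarrow> t \<notin> S" by (simp add: T_iff)

lemma B_false: "Bcond \<Longrightarrow> False"
proof -
  assume B: "Bcond"
  obtain f where f: "f < length P" "P ! f \<in> H" "\<And>j. j < f \<Longrightarrow> P ! j \<notin> H" using first_H by blast
  define z where "z = P ! f"
  have znS: "z \<notin> S" unfolding z_def by (rule first_notS[OF f(1) f(3)])
  have znL: "z \<notin> L" unfolding z_def by (rule first_notL[OF f])
  have zH: "z \<in> H" unfolding z_def by (rule f(2))
  have zT0: "z \<in> T" using zH znS by blast
  define T' where "T' = T - L"
  have T'T: "t \<in> T' \<Longrightarrow> t \<in> T" for t unfolding T'_def by (rule DiffD1)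
  have T'L: "t \<in> T' \<Longrightarrow> t \<in> T - L" for t unfolding T'_def .
  have zT: "z \<in> T'" unfolding T'_def using zT0 znL by (rule DiffI)
  define Salt where "Salt = {s \<in> S. \<exists>p\<in>T'. E s p}"
  have SaltI: "s \<in> S \<Longrightarrow> p \<in> T' \<Longrightarrow> E s p \<Longrightarrow> s \<in> Salt" for s p unfolding Salt_def by blast
  have SaltD: "s \<in> Salt \<Longrightarrow> s \<in> S \<and> (\<exists>p\<in>T'. E s p)" for s unfolding Salt_def by blast
  have fT': "finite T'" unfolding T'_def using finT by (rule finite_Diff)
  have fSalt: "finite Salt" unfolding Salt_def using finS by (rule finite_subset[rotated]) blast
  obtain a where aS: "a \<in> S" and Eaz: "E a z" using T_nbr[OF zT0] by blast
  have aSalt: "a \<in> Salt" using SaltI[OF aS zT Eaz] .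
  have TV: "T \<subseteq> V" by (auto simp: T_iff)
  have SaltH: "Salt \<subseteq> H" using SaltD by blast
  have F1: "{s \<in> Salt. E s t} = {u \<in> H. E t u}" if tT: "t \<in> T'" for t
  proof -
    obtain a' where a'S: "a' \<in> S" and Ea't: "E a' t" using T_nbr[OF T'T[OF tT]] by blast
    obtain b where bS: "b \<in> S" and ba: "b \<noteq> a'" and eq: "{u \<in> H. E t u} = {a', b}"
      using Tp_nbrs[OF B T'L[OF tT] a'S Ea't] by blast
    have "b \<in> {u \<in> H. E t u}" using eq by blast
    then have "E b t" using symE by blast
    then have "a' \<in> Salt" "b \<in> Salt" using SaltI[OF a'S tT Ea't] SaltI[OF bS tT] by blast+
    show ?thesis
    proof (intro equalityI subsetI)
      fix u assume u: "u \<in> {s \<in> Salt. E s t}"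
      then have "u \<in> H" "E t u" using SaltH symE by auto
      then show "u \<in> {u \<in> H. E t u}" by simp
    next
      fix u assume u: "u \<in> {u \<in> H. E t u}"
      then have "u = a' \<or> u = b" using eq by blast
      then have "u \<in> Salt" using \<open>a' \<in> Salt\<close> \<open>b \<in> Salt\<close> by blast
      moreover have "E u t" using u symE by blast
      ultimately show "u \<in> {s \<in> Salt. E s t}" by simp
    qed
  qed
  have F1c: "card {s \<in> Salt. E s t} = 2" if tT: "t \<in> T'" for t
    using F1[OF tT] B_deg2[OF B T'L[OF tT]] by (simp only:)
  have F2c: "card {t \<in> T'. E s t} = 2" if sA: "s \<in> Salt" for s
  proof -
    obtain p where sS: "s \<in> S" and pT: "p \<in> T'" and Esp: "E s p" using SaltD[OF sA] by blast
    obtain l q where lL: "l \<in> L" and qT: "q \<in> T - L" and qp: "q \<noteq> p"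
      and N: "{u \<in> V. E s u} = {l, p, q}"
      using Salt_nbrs[OF B sS T'L[OF pT] Esp] by blast
    have qT': "q \<in> T'" unfolding T'_def by (rule qT)
    have lT': "l \<notin> T'" unfolding T'_def using lL by blast
    have "{t \<in> T'. E s t} = {p, q}"
    proof
      show "{t \<in> T'. E s t} \<subseteq> {p, q}"
      proof
        fix t assume t: "t \<in> {t \<in> T'. E s t}"
        then have "t \<in> {u \<in> V. E s u}" using TV T'T by blast
        then have "t \<in> {l, p, q}" using N by blast
        then show "t \<in> {p, q}" using t lT' by blast
      qed
      have "p \<in> {u \<in> V. E s u}" "q \<in> {u \<in> V. E s u}" using N by blast+
      then show "{p, q} \<subseteq> {t \<in> T'. E s t}" using pT qT' by blast
    qed
    then show ?thesis using qp by simp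
  qed
  have "(\<Sum>s\<in>Salt. card {t \<in> T'. E s t}) = (\<Sum>t\<in>T'. card {s \<in> Salt. E s t})"
    by (rule double_count[OF fSalt fT'])
  also have "\<dots> = (\<Sum>t\<in>T'. 2)" by (rule sum.cong[OF refl]) (rule F1c)
  finally have "(\<Sum>s\<in>Salt. card {t \<in> T'. E s t}) = 2 * card T'" by simp
  moreover have "(\<Sum>s\<in>Salt. card {t \<in> T'. E s t}) = (\<Sum>s\<in>Salt. 2)" by (rule sum.cong[OF refl]) (rule F2c)
  ultimately have "2 * card Salt = 2 * card T'" by simp
  then have cST: "card Salt = card T'" by simp
  obtain Q where CQ: "C Q" and lQ: "last Q = a" using aS by (auto simp: S_iff)
  have G1: "card {s \<in> Salt. {s, t} \<in> adjs Q} = 1" if tT: "t \<in> T'" for t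
  proof -
    have "{s \<in> Salt. {s, t} \<in> adjs Q} = {u \<in> H. {u, t} \<in> adjs Q}"
    proof
      show "{s \<in> Salt. {s, t} \<in> adjs Q} \<subseteq> {u \<in> H. {u, t} \<in> adjs Q}" using SaltH by blast
      show "{u \<in> H. {u, t} \<in> adjs Q} \<subseteq> {s \<in> Salt. {s, t} \<in> adjs Q}"
      proof
        fix u assume u: "u \<in> {u \<in> H. {u, t} \<in> adjs Q}"
        then have "E u t" using path_adj_E[OF CQ] by blast
        then have "u \<in> {u \<in> H. E t u}" using u symE by blast
        then have "u \<in> {s \<in> Salt. E s t}" using F1[OF tT] by simp
        then show "u \<in> {s \<in> Salt. {s, t} \<in> adjs Q}" using u by blast
      qed
    qed
    moreover obtain a' where a'S: "a' \<in> S" and Ea't: "E a' t" using T_nbr[OF T'T[OF tT]] by blast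
    then have "dq Q t = 1" using Tp_nbrs[OF B T'L[OF tT] a'S Ea't] CQ by blast
    ultimately show ?thesis unfolding dq_def by simp
  qed
  have G2: "card {t \<in> T'. {s, t} \<in> adjs Q} = (if s = a then 0 else 1)" if sA: "s \<in> Salt" for s
  proof (cases "s = a")
    case True
    have eq0: "{t \<in> T'. {s, t} \<in> adjs Q} = {}" using end_count[OF B CQ] lQ True unfolding T'_def by simp
    show ?thesis unfolding eq0 using True by simp
  next
    case False
    obtain p where sS: "s \<in> S" and pT: "p \<in> T'" and Esp: "E s p" using SaltD[OF sA] by blast
    have "s \<noteq> last Q" using False lQ by simp
    then have "card {t \<in> T - L. {s, t} \<in> adjs Q} = 1" by (rule interior_count[OF B CQ sS T'L[OF pT] Esp])
    then show ?thesis using False unfolding T'_def by simp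
  qed
  have "(\<Sum>s\<in>Salt. card {t \<in> T'. {s, t} \<in> adjs Q}) = (\<Sum>t\<in>T'. card {s \<in> Salt. {s, t} \<in> adjs Q})"
    by (rule double_count[OF fSalt fT'])
  also have "\<dots> = (\<Sum>t\<in>T'. 1)" by (rule sum.cong[OF refl]) (rule G1)
  finally have eq1: "(\<Sum>s\<in>Salt. card {t \<in> T'. {s, t} \<in> adjs Q}) = card T'" by simp
  have "(\<Sum>s\<in>Salt. card {t \<in> T'. {s, t} \<in> adjs Q}) = (\<Sum>s\<in>Salt. if s = a then 0 else 1)"
    by (rule sum.cong[OF refl]) (rule G2)
  also have "\<dots> = (\<Sum>s\<in>Salt - {a}. 1)"
    using sum.remove[OF fSalt aSalt, of "\<lambda>s. if s = a then 0 else (1::nat)"]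
    by (simp add: sum.cong[of "Salt - {a}" "Salt - {a}" "\<lambda>s. if s = a then 0 else (1::nat)" "\<lambda>_. 1"])
  also have "\<dots> = card Salt - 1" using fSalt aSalt by simp
  finally have "card T' = card Salt - 1" using eq1 by simp
  moreover have "0 < card Salt" using fSalt aSalt card_gt_0_iff by blast
  ultimately show False using cST by simp
qed

theorem main: "card H < edges_in E H"
  using count_main B_false by blast

end

theorem lemma2p1:
  fixes V :: "'a set" and E :: "'a \<Rightarrow> 'a \<Rightarrow> bool" and x0 :: 'a and P :: "'a list"
  assumes "simple_graph V E"
    and "min_degree_ge V E 3"
    and "x0 \<in> V"
    and "longest_path_from V E x0 P"
  shows "edges_in E (posa_S E P \<union> posa_T V E P) > card (posa_S E P \<union> posa_T V E P)"
proof -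
  interpret posa V E x0 P using assms by unfold_locales
  show ?thesis by (rule main)
qed

end
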